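(* Let $T$ be an array and let $s, n_1, n_2 \ge 0$ be integers such that positions $s,\dots,s+n_1-1$ of $T$ hold a list $A$ of $n_1$ distinct elements and positions $s+n_1,\dots,s+n_1+n_2-1$ hold a list $B$ of $n_2$ further distinct elements. Suppose $A$ and $B$ are randomly shuffled, i.e. each is in a uniformly random order, independently of each other and of the random bits and random integers drawn by the procedure. Then after running $\textsc{Merge}(T,s,n_1,n_2)$ (defined in the context), positions $s,\dots,s+n_1+n_2-1$ of $T$ hold a randomly shuffled union $C$ of $A$ and $B$, i.e. the $n=n_1+n_2$ elements in a uniformly random order.
   Context: The procedure $\textsc{Merge}(T,s,n_1,n_2)$: set $i\gets s$, $j\gets s+n_1$, $n\gets s+n_1+n_2$. Repeat: draw an independent fair random bit; if it is $0$, then break out of the loop if $i=j$; if it is $1$, then break out of the loop if $j=n$, and otherwise swap $T[i]$ and $T[j]$ and set $j\gets j+1$; in either non-breaking case set $i\gets i+1$. After the loop, while $i<n$: draw an integer $m$ uniformly at random from $\{s,\dots,i\}$ (independently of everything else), swap $T[i]$ and $T[m]$, and set $i\gets i+1$. *)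

theory Defs
  imports "HOL-Probability.Probability" "HOL-Combinatorics.Multiset_Permutations"
begin

text \<open>Arrays are modelled as lists; positions are 0-based list indices.\<close>

definition list_swap :: "'a list \<Rightarrow> nat \<Rightarrow> nat \<Rightarrow> 'a list" where
  "list_swap T i j = T[i := T ! j, j := T ! i]"

text \<open>A fair random bit: True = bit 1, False = bit 0.\<close>
definition fair_bit :: "bool pmf" where
  "fair_bit = bernoulli_pmf (1/2)"

text \<open>The outer guard i \<le> j \<le> n is an invariant of the loop started from
  i = s, j = s + n1, n = s + n1 + n2, so it never fires in Merge; it only
  makes the function total for arbitrary arguments.\<close>
function merge_loop1 :: "'a list \<Rightarrow> nat \<Rightarrow> nat \<Rightarrow> nat \<Rightarrow> ('a list \<times> nat) pmf" where
  "merge_loop1 T i j n =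
     (if i \<le> j \<and> j \<le> n then
        bind_pmf fair_bit (\<lambda>b.
          if \<not> b then
            (if i = j then return_pmf (T, i) else merge_loop1 T (i + 1) j n)
          else
            (if j = n then return_pmf (T, i)
             else merge_loop1 (list_swap T i j) (i + 1) (j + 1) n))
      else return_pmf (T, i))"
  by pat_completeness auto
termination
  by (relation "measures [\<lambda>(T, i, j, n). n - j, \<lambda>(T, i, j, n). j - i]") auto

function merge_loop2 :: "'a list \<Rightarrow> nat \<Rightarrow> nat \<Rightarrow> nat \<Rightarrow> 'a list pmf" where
  "merge_loop2 T s i n =
     (if i < n then
        bind_pmf (pmf_of_set {s..i}) (\<lambda>m. merge_loop2 (list_swap T i m) s (i + 1) n)
      else return_pmf T)"
  by pat_completeness auto
termination
  by (relation "Wellfounded.measure (\<lambda>(T, s, i, n). n - i)") auto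

definition Merge :: "'a list \<Rightarrow> nat \<Rightarrow> nat \<Rightarrow> nat \<Rightarrow> 'a list pmf" where
  "Merge T s n1 n2 =
     bind_pmf (merge_loop1 T s (s + n1) (s + n1 + n2))
       (\<lambda>(T', i). merge_loop2 T' s i (s + n1 + n2))"

definition shuffled :: "'a set \<Rightarrow> 'a list pmf" where
  "shuffled S = pmf_of_set (permutations_of_set S)"

end

theory Submission
  imports Defs
begin

declare merge_loop2.simps[simp del] merge_loop1.simps[simp del]

lemma pmf_of_set_perm_inv:
  assumes "finite P" "P \<noteq> {}" "inj_on f P" "f ` P \<subseteq> P"
  shows "map_pmf f (pmf_of_set P) = pmf_of_set P"
proof -
  have "f ` P = P"
    using assms by (metis card_image card_subset_eq)
  thus ?thesis using assms by (simp add: map_pmf_of_set_inj)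
qed

lemma pmf_of_set_Sigma:
  assumes "finite I" "I \<noteq> {}" "\<And>i. i \<in> I \<Longrightarrow> finite (F i)"
    "\<And>i. i \<in> I \<Longrightarrow> card (F i) = c" "c > 0"
  shows "pmf_of_set (Sigma I F) =
         bind_pmf (pmf_of_set I) (\<lambda>i. map_pmf (Pair i) (pmf_of_set (F i)))"
proof (rule pmf_eqI)
  fix z :: "'a \<times> 'b"
  obtain i p where z: "z = (i, p)" by (cases z)
  have Fne: "\<And>i. i \<in> I \<Longrightarrow> F i \<noteq> {}" using assms(4,5) by fastforce
  have cS: "card (Sigma I F) = card I * c"
    using assms by (simp add: card_SigmaI)
  have fS: "finite (Sigma I F)" using assms by auto
  have neS: "Sigma I F \<noteq> {}" using Fne assms(2) by auto
  have pm: "pmf (map_pmf (Pair i') (pmf_of_set (F i'))) (i, p) =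
            (if i' = i then pmf (pmf_of_set (F i')) p else 0)" if "i' \<in> I" for i'
  proof (cases "i' = i")
    case True
    then show ?thesis by (simp add: pmf_map_inj' inj_on_def)
  next
    case False
    then show ?thesis by (auto simp: pmf_eq_0_set_pmf)
  qed
  have "pmf (bind_pmf (pmf_of_set I) (\<lambda>i. map_pmf (Pair i) (pmf_of_set (F i)))) z
        = (\<Sum>i'\<in>I. pmf (map_pmf (Pair i') (pmf_of_set (F i'))) (i, p)) / card I"
    using assms z by (simp add: pmf_bind_pmf_of_set)
  also have "\<dots> = (\<Sum>i'\<in>I. (if i' = i then pmf (pmf_of_set (F i')) p else 0)) / card I"
    using pm by simp
  also have "\<dots> = (if i \<in> I then pmf (pmf_of_set (F i)) p else 0) / card I"
    using assms(1) by (simp add: sum.delta')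
  also have "\<dots> = pmf (pmf_of_set (Sigma I F)) z"
    using z assms Fne fS neS cS by (auto simp: indicator_def)
  finally show "pmf (pmf_of_set (Sigma I F)) z = pmf (bind_pmf (pmf_of_set I) (\<lambda>i. map_pmf (Pair i) (pmf_of_set (F i)))) z" ..
qed

lemma pmf_of_set_times:
  assumes "finite A" "A \<noteq> {}" "finite B" "B \<noteq> {}"
  shows "pmf_of_set (A \<times> B) = bind_pmf (pmf_of_set A) (\<lambda>a. map_pmf (Pair a) (pmf_of_set B))"
  using pmf_of_set_Sigma[of A "\<lambda>_. B" "card B"] assms by (simp add: card_gt_0_iff)

lemma list_swap_length[simp]: "length (list_swap T i j) = length T"
  by (simp add: list_swap_def)

lemma list_swap_mset:
  "i < length T \<Longrightarrow> j < length T \<Longrightarrow> mset (list_swap T i j) = mset T"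
  unfolding list_swap_def using mset_swap[of j T i] by simp

lemma list_swap_nth_i:
  "i < length T \<Longrightarrow> j < length T \<Longrightarrow> list_swap T i j ! j = T ! i"
  by (simp add: list_swap_def)

lemma list_swap_invol:
  "i < length T \<Longrightarrow> j < length T \<Longrightarrow> list_swap (list_swap T i j) i j = T"
  unfolding list_swap_def
  by (cases "i = j") (auto simp: nth_list_update list_update_swap intro!: nth_equalityI)

lemma list_swap_perm:
  assumes "T \<in> permutations_of_set S" "i < length T" "j < length T"
  shows "list_swap T i j \<in> permutations_of_set S"
proof -
  have m: "mset (list_swap T i j) = mset T" using assms list_swap_mset by blast
  hence "set (list_swap T i j) = set T" by (metis set_mset_mset)
  moreover have "distinct (list_swap T i j)" using m assms
    by (metis distinct_count_atmost_1 permutations_of_setD(2) set_mset_mset count_mset)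
  ultimately show ?thesis using assms by (auto simp: permutations_of_set_def)
qed

lemma inside_out:
  assumes "finite S0" "z \<notin> S0"
  shows "bind_pmf (pmf_of_set (permutations_of_set S0))
           (\<lambda>P. map_pmf (\<lambda>m. list_swap (P @ [z]) (card S0) m) (pmf_of_set {0..card S0}))
         = pmf_of_set (permutations_of_set (insert z S0))"
proof -
  define k where "k = card S0"
  define D where "D = permutations_of_set S0 \<times> {0..k}"
  define g where "g = (\<lambda>(P, m). list_swap (P @ [z]) k m)"
  have PS: "permutations_of_set S0 \<noteq> {}" using assms by simp
  have lenP: "\<And>P. P \<in> permutations_of_set S0 \<Longrightarrow> length P = k"
    by (simp add: k_def length_finite_permutations_of_set)
  have inj: "inj_on g D"
  proof (rule inj_onI)
    fix x y assume x: "x \<in> D" and y: "y \<in> D" and e: "g x = g y"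
    obtain P m where xx: "x = (P, m)" by (cases x)
    obtain P' m' where yy: "y = (P', m')" by (cases y)
    have P: "P \<in> permutations_of_set S0" "m \<le> k" using x xx D_def by auto
    have P': "P' \<in> permutations_of_set S0" "m' \<le> k" using y yy D_def by auto
    have Pz: "P @ [z] \<in> permutations_of_set (insert z S0)"
      using P assms by (auto simp: permutations_of_set_def)
    have P'z: "P' @ [z] \<in> permutations_of_set (insert z S0)"
      using P' assms by (auto simp: permutations_of_set_def)
    define Q where "Q = list_swap (P @ [z]) k m"
    have lP: "length (P @ [z]) = Suc k" using lenP P by simp
    have lP': "length (P' @ [z]) = Suc k" using lenP P' by simp
    have Q': "Q = list_swap (P' @ [z]) k m'" using e xx yy Q_def g_def by simp
    have dQ: "distinct Q" using list_swap_perm[OF Pz] lP P Q_def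
      by (metis less_Suc_eq_le permutations_of_setD(2) lessI)
    have "Q ! m = z" using Q_def lP P
      by (metis list_swap_nth_i le_imp_less_Suc lessI nth_append_length lenP)
    moreover have "Q ! m' = z" using Q' lP' P'
      by (metis list_swap_nth_i le_imp_less_Suc lessI nth_append_length lenP)
    moreover have "length Q = Suc k" using Q_def lP by simp
    ultimately have mm: "m = m'" using dQ P P'
      by (metis le_imp_less_Suc nth_eq_iff_index_eq)
    have "P @ [z] = P' @ [z]"
      using list_swap_invol[of k "P @ [z]" m] list_swap_invol[of k "P' @ [z]" m'] lP lP' P P' mm Q_def Q'
      by (metis le_imp_less_Suc lessI)
    thus "x = y" using xx yy mm by simp
  qed
  have "bind_pmf (pmf_of_set (permutations_of_set S0))
           (\<lambda>P. map_pmf (\<lambda>m. list_swap (P @ [z]) k m) (pmf_of_set {0..k}))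
        = map_pmf g (pmf_of_set D)"
    unfolding D_def using PS
    by (simp add: pmf_of_set_times map_bind_pmf pmf.map_comp g_def o_def)
  also have "\<dots> = pmf_of_set (g ` D)"
  proof (rule map_pmf_of_set_inj)
    show "inj_on g D" by (rule inj)
    show "D \<noteq> {}" using PS D_def by auto
    show "finite D" using D_def by simp
  qed
  also have "g ` D = permutations_of_set (insert z S0)"
  proof (rule card_subset_eq)
    show "finite (permutations_of_set (insert z S0))" by simp
    show "g ` D \<subseteq> permutations_of_set (insert z S0)"
    proof
      fix q assume "q \<in> g ` D"
      then obtain P m where "P \<in> permutations_of_set S0" "m \<le> k" "q = list_swap (P @ [z]) k m"
        by (auto simp: D_def g_def)
      moreover have "P @ [z] \<in> permutations_of_set (insert z S0)"
        using calculation assms by (auto simp: permutations_of_set_def)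
      ultimately show "q \<in> permutations_of_set (insert z S0)"
        using list_swap_perm lenP by (metis length_append_singleton le_imp_less_Suc lessI)
    qed
    show "card (g ` D) = card (permutations_of_set (insert z S0))"
      using inj assms by (simp add: card_image D_def k_def fact_Suc)
  qed
  finally show ?thesis by (simp add: k_def)
qed

lemma list_swap_append:
  assumes "i < length X" "j < length X"
  shows "list_swap (L @ X @ Y) (length L + i) (length L + j) = L @ list_swap X i j @ Y"
  using assms unfolding list_swap_def by (simp add: list_update_append nth_append)

lemma pmf_of_set_shift:
  "pmf_of_set {s..s + k} = map_pmf (\<lambda>m. s + m) (pmf_of_set {0..k::nat})"
proof -
  have "(\<lambda>m. s + m) ` {0..k} = {s..s+k}"
    by (auto simp: image_iff intro!: bexI[where x="_ - s"])
  thus ?thesis by (subst map_pmf_of_set_inj) (auto simp: add.commute)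
qed

lemma loop2_shuffle:
  assumes "finite S0" "distinct Z" "set Z \<inter> S0 = {}"
  shows "map_pmf (\<lambda>T. take (card S0 + length Z) (drop (length L) T))
     (bind_pmf (pmf_of_set (permutations_of_set S0))
        (\<lambda>P. merge_loop2 (L @ P @ Z @ R) (length L) (length L + card S0)
                 (length L + card S0 + length Z)))
   = pmf_of_set (permutations_of_set (S0 \<union> set Z))"
  using assms
proof (induction Z arbitrary: S0)
  case Nil
  have "bind_pmf (pmf_of_set (permutations_of_set S0))
        (\<lambda>P. merge_loop2 (L @ P @ [] @ R) (length L) (length L + card S0)
                 (length L + card S0 + length [])) =
        map_pmf (\<lambda>P. L @ P @ R) (pmf_of_set (permutations_of_set S0))"
    by (subst merge_loop2.simps) (simp add: map_pmf_def)
  moreover have "map_pmf (\<lambda>T. take (card S0 + length []) (drop (length L) T))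
       (map_pmf (\<lambda>P. L @ P @ R) (pmf_of_set (permutations_of_set S0)))
      = map_pmf id (pmf_of_set (permutations_of_set S0))"
    unfolding pmf.map_comp
    by (rule map_pmf_cong) (use Nil in \<open>auto simp: length_finite_permutations_of_set\<close>)
  ultimately show ?case by simp
next
  case (Cons z Z)
  define k where "k = card S0"
  define s where "s = length L"
  have zS: "z \<notin> S0" using Cons.prems by auto
  have ck: "card (insert z S0) = Suc k" using zS Cons.prems k_def by simp
  have PS: "permutations_of_set S0 \<noteq> {}" using Cons.prems by simp
  have step: "merge_loop2 (L @ P @ (z # Z) @ R) s (s + k) (s + k + length (z # Z)) =
      bind_pmf (map_pmf (\<lambda>m. list_swap (P @ [z]) k m) (pmf_of_set {0..k}))
        (\<lambda>P'. merge_loop2 (L @ P' @ Z @ R) s (s + card (insert z S0))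
                 (s + card (insert z S0) + length Z))"
    if P: "P \<in> permutations_of_set S0" for P
  proof -
    have lP: "length P = k" using P k_def by (simp add: length_finite_permutations_of_set)
    have "merge_loop2 (L @ P @ (z # Z) @ R) s (s + k) (s + k + length (z # Z)) =
      bind_pmf (pmf_of_set {s..s+k})
        (\<lambda>m. merge_loop2 (list_swap (L @ P @ (z # Z) @ R) (s + k) m) s (s + k + 1)
               (s + k + length (z # Z)))"
      by (subst merge_loop2.simps) simp
    also have "\<dots> = bind_pmf (pmf_of_set {0..k})
        (\<lambda>m. merge_loop2 (list_swap (L @ P @ (z # Z) @ R) (s + k) (s + m)) s (s + k + 1)
               (s + k + length (z # Z)))"
      by (simp add: pmf_of_set_shift bind_map_pmf)
    also have "\<dots> = bind_pmf (pmf_of_set {0..k})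
        (\<lambda>m. merge_loop2 (L @ list_swap (P @ [z]) k m @ Z @ R) s (s + card (insert z S0))
                 (s + card (insert z S0) + length Z))"
    proof (rule bind_pmf_cong[OF refl])
      fix m assume "m \<in> set_pmf (pmf_of_set {0..k})"
      hence m: "m \<le> k" by simp
      have "list_swap (L @ (P @ [z]) @ Z @ R) (length L + k) (length L + m)
            = L @ list_swap (P @ [z]) k m @ Z @ R"
        by (rule list_swap_append) (use m lP in auto)
      thus "merge_loop2 (list_swap (L @ P @ (z # Z) @ R) (s + k) (s + m)) s (s + k + 1)
               (s + k + length (z # Z)) =
            merge_loop2 (L @ list_swap (P @ [z]) k m @ Z @ R) s (s + card (insert z S0))
                 (s + card (insert z S0) + length Z)"
        using ck s_def by simp
    qed
    finally show ?thesis by (simp add: bind_map_pmf)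
  qed
  have "bind_pmf (pmf_of_set (permutations_of_set S0))
        (\<lambda>P. merge_loop2 (L @ P @ (z # Z) @ R) (length L) (length L + card S0)
                 (length L + card S0 + length (z # Z)))
      = bind_pmf (pmf_of_set (permutations_of_set S0))
        (\<lambda>P. bind_pmf (map_pmf (\<lambda>m. list_swap (P @ [z]) k m) (pmf_of_set {0..k}))
        (\<lambda>P'. merge_loop2 (L @ P' @ Z @ R) s (s + card (insert z S0))
                 (s + card (insert z S0) + length Z)))"
    by (rule bind_pmf_cong[OF refl]) (use step PS in \<open>auto simp: s_def k_def\<close>)
  also have "\<dots> = bind_pmf (pmf_of_set (permutations_of_set (insert z S0)))
        (\<lambda>P'. merge_loop2 (L @ P' @ Z @ R) s (s + card (insert z S0))
                 (s + card (insert z S0) + length Z))"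
  proof -
    have io: "bind_pmf (pmf_of_set (permutations_of_set S0))
           (\<lambda>P. map_pmf (\<lambda>m. list_swap (P @ [z]) k m) (pmf_of_set {0..k}))
         = pmf_of_set (permutations_of_set (insert z S0))"
      using inside_out[of S0 z] Cons.prems zS by (simp add: k_def)
    show ?thesis by (subst bind_assoc_pmf[symmetric], subst io, rule refl)
  qed
  finally have eq: "bind_pmf (pmf_of_set (permutations_of_set S0))
        (\<lambda>P. merge_loop2 (L @ P @ (z # Z) @ R) (length L) (length L + card S0)
                 (length L + card S0 + length (z # Z))) = \<dots>" .
  have IH: "map_pmf (\<lambda>T. take (card (insert z S0) + length Z) (drop (length L) T))
     (bind_pmf (pmf_of_set (permutations_of_set (insert z S0)))
        (\<lambda>P. merge_loop2 (L @ P @ Z @ R) (length L) (length L + card (insert z S0))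
                 (length L + card (insert z S0) + length Z)))
   = pmf_of_set (permutations_of_set (insert z S0 \<union> set Z))"
    using Cons.IH[of "insert z S0"] Cons.prems by auto
  show ?case using eq IH ck k_def s_def by simp
qed

fun interleave :: "bool list \<Rightarrow> 'a list \<Rightarrow> 'a list \<Rightarrow> 'a list" where
  "interleave [] xs ys = []"
| "interleave (True # w) xs ys = hd xs # interleave w (tl xs) ys"
| "interleave (False # w) xs ys = hd ys # interleave w xs (tl ys)"

lemma length_interleave[simp]: "length (interleave w xs ys) = length w"
  by (induction w xs ys rule: interleave.induct) auto

lemma count_bool: "count_list w True + count_list w False = length (w :: bool list)"
  by (induction w) auto

lemma interleave_snoc_True:
  "length xs = count_list w True \<Longrightarrow> length ys = count_list w False \<Longrightarrow>
   interleave (w @ [True]) (xs @ [v]) ys = interleave w xs ys @ [v]"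
proof (induction w arbitrary: xs ys)
  case Nil then show ?case by simp
next
  case (Cons c w)
  show ?case
  proof (cases c)
    case True
    then obtain x xs' where "xs = x # xs'" using Cons.prems by (cases xs) auto
    then show ?thesis using Cons True by simp
  next
    case False
    then obtain y ys' where "ys = y # ys'" using Cons.prems by (cases ys) auto
    then show ?thesis using Cons False by simp
  qed
qed

lemma interleave_snoc_False:
  "length xs = count_list w True \<Longrightarrow> length ys = count_list w False \<Longrightarrow>
   interleave (w @ [False]) xs (ys @ [v]) = interleave w xs ys @ [v]"
proof (induction w arbitrary: xs ys)
  case Nil then show ?case by simp
next
  case (Cons c w)
  show ?case
  proof (cases c)
    case True
    then obtain x xs' where "xs = x # xs'" using Cons.prems by (cases xs) auto
    then show ?thesis using Cons True by simp
  next
    case False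
    then obtain y ys' where "ys = y # ys'" using Cons.prems by (cases ys) auto
    then show ?thesis using Cons False by simp
  qed
qed

lemma mset_interleave:
  "length xs = count_list w True \<Longrightarrow> length ys = count_list w False \<Longrightarrow>
   mset (interleave w xs ys) = mset xs + mset ys"
proof (induction w arbitrary: xs ys)
  case Nil then show ?case by simp
next
  case (Cons c w)
  show ?case
  proof (cases c)
    case True
    then obtain x xs' where "xs = x # xs'" using Cons.prems by (cases xs) auto
    then show ?thesis using Cons True by simp
  next
    case False
    then obtain y ys' where "ys = y # ys'" using Cons.prems by (cases ys) auto
    then show ?thesis using Cons False by simp
  qed
qed

lemma interleave_filter:
  "interleave (map f P) (filter f P) (filter (\<lambda>x. \<not> f x) P) = P"
  by (induction P) auto

definition build :: "'a list \<Rightarrow> 'a list \<Rightarrow> 'a list \<Rightarrow> 'a list \<Rightarrow> bool list \<Rightarrow> 'a list" where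
  "build L R A B w = L @ interleave w (take (count_list w True) A) (take (count_list w False) B)
      @ drop (count_list w True) A @ drop (count_list w False) B @ R"

definition rot :: "nat \<Rightarrow> 'a list \<Rightarrow> 'a list" where
  "rot x A = take x A @ rotate1 (drop x A)"

lemma length_build[simp]:
  "count_list w True \<le> length A \<Longrightarrow> count_list w False \<le> length B \<Longrightarrow>
   length (build L R A B w) = length L + length A + length B + length R"
  unfolding build_def using count_bool[of w] by simp

lemma build_True:
  assumes "count_list w True < length A" "count_list w False \<le> length B"
  shows "build L R A B (w @ [True]) = build L R A B w"
proof -
  let ?x = "count_list w True" and ?y = "count_list w False"
  have "take (Suc ?x) A = take ?x A @ [A ! ?x]" using assms by (simp add: take_Suc_conv_app_nth)
  moreover have "drop ?x A = A ! ?x # drop (Suc ?x) A" using assms by (simp add: Cons_nth_drop_Suc)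
  moreover have "interleave (w @ [True]) (take ?x A @ [A ! ?x]) (take ?y B) =
        interleave w (take ?x A) (take ?y B) @ [A ! ?x]"
    using assms by (intro interleave_snoc_True) auto
  ultimately show ?thesis unfolding build_def by simp
qed

lemma list_swap_mid:
  "list_swap (P @ u # M @ v # Q) (length P) (length P + 1 + length M) = P @ v # M @ u # Q"
  unfolding list_swap_def by (simp add: list_update_append nth_append)

lemma build_False:
  assumes "count_list w True \<le> length A" "count_list w False < length B"
  shows "list_swap (build L R A B w) (length L + length w) (length L + length A + count_list w False)
         = build L R (rot (count_list w True) A) B (w @ [False])"
proof -
  let ?x = "count_list w True" and ?y = "count_list w False"
  have lw: "length w = ?x + ?y" using count_bool[of w] by simp
  have tB: "take (Suc ?y) B = take ?y B @ [B ! ?y]" using assms by (simp add: take_Suc_conv_app_nth)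
  have dB: "drop ?y B = B ! ?y # drop (Suc ?y) B" using assms by (simp add: Cons_nth_drop_Suc)
  have il: "interleave (w @ [False]) (take ?x A) (take ?y B @ [B ! ?y]) =
        interleave w (take ?x A) (take ?y B) @ [B ! ?y]"
    using assms by (intro interleave_snoc_False) auto
  have tr: "take ?x (rot ?x A) = take ?x A" and dr: "drop ?x (rot ?x A) = rotate1 (drop ?x A)"
    using assms by (auto simp: rot_def)
  show ?thesis
  proof (cases "?x < length A")
    case True
    have dA: "drop ?x A = A ! ?x # drop (Suc ?x) A" using True by (simp add: Cons_nth_drop_Suc)
    let ?P = "L @ interleave w (take ?x A) (take ?y B)"
    have bw: "build L R A B w = ?P @ (A ! ?x) # drop (Suc ?x) A @ (B ! ?y) # drop (Suc ?y) B @ R"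
      unfolding build_def using dA dB by simp
    have i1: "length L + length w = length ?P" by simp
    have i2: "length L + length A + ?y = length ?P + 1 + length (drop (Suc ?x) A)"
      using True lw by simp
    have X: "list_swap (?P @ (A ! ?x) # drop (Suc ?x) A @ (B ! ?y) # drop (Suc ?y) B @ R)
        (length ?P) (length ?P + 1 + length (drop (Suc ?x) A))
        = ?P @ (B ! ?y) # drop (Suc ?x) A @ (A ! ?x) # drop (Suc ?y) B @ R"
      by (rule list_swap_mid)
    have "list_swap (build L R A B w) (length L + length w) (length L + length A + ?y)
        = ?P @ (B ! ?y) # drop (Suc ?x) A @ (A ! ?x) # drop (Suc ?y) B @ R"
      by (simp only: bw i1 i2 X)
    also have "\<dots> = build L R (rot ?x A) B (w @ [False])"
      unfolding build_def using tr dr dA tB il by simp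
    finally show ?thesis .
  next
    case False
    hence xa: "?x = length A" using assms by simp
    have rA: "rot ?x A = A" using xa by (simp add: rot_def)
    have "list_swap (build L R A B w) (length L + length w) (length L + length A + ?y) = build L R A B w"
      using xa lw assms unfolding list_swap_def by (simp add: add.assoc)
    also have "\<dots> = build L R (rot ?x A) B (w @ [False])"
      unfolding build_def using rA xa tB dB il by simp
    finally show ?thesis .
  qed
qed

lemma take_rot: "take x (rot x A) = take x A"
  by (cases "x \<le> length A") (auto simp: rot_def)

lemma drop_rot: "drop x (rot x A) = rotate1 (drop x A)"
  by (cases "x \<le> length A") (auto simp: rot_def)

lemma rot_perm: "A \<in> permutations_of_set S \<Longrightarrow> rot x A \<in> permutations_of_set S"
proof -
  assume A: "A \<in> permutations_of_set S"
  have "set (rot x A) = set A"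
    by (metis append_take_drop_id rot_def set_append set_rotate1)
  moreover have "distinct (rot x A)"
    using A unfolding permutations_of_set_def rot_def
    by (metis append_take_drop_id distinct_append distinct1_rotate set_rotate1 mem_Collect_eq)
  ultimately show ?thesis using A by (auto simp: permutations_of_set_def)
qed

lemma rot_inj: "inj (rot x)"
proof (rule injI)
  fix A A' assume e: "rot x A = rot x A'"
  have "take x A = take x A'" using e take_rot by metis
  moreover have "drop x A = drop x A'" using e drop_rot inj_rotate1
    by (metis injD)
  ultimately show "A = A'" by (metis append_take_drop_id)
qed

lemma rot_shuffle:
  "finite S \<Longrightarrow> map_pmf (rot x) (pmf_of_set (permutations_of_set S)) = pmf_of_set (permutations_of_set S)"
  by (rule pmf_of_set_perm_inv) (auto intro: rot_perm inj_on_subset[OF rot_inj])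

lemma perm_mset:
  "mset xs = mset ys \<Longrightarrow> ys \<in> permutations_of_set S \<Longrightarrow> xs \<in> permutations_of_set S"
  unfolding permutations_of_set_def
  by (metis mem_Collect_eq mset_eq_imp_distinct_iff mset_eq_setD)

lemma interleave_props:
  "length xs = count_list w True \<Longrightarrow> length ys = count_list w False \<Longrightarrow>
   (\<forall>e\<in>set xs. f e) \<Longrightarrow> (\<forall>e\<in>set ys. \<not> f e) \<Longrightarrow>
   map f (interleave w xs ys) = w \<and> filter f (interleave w xs ys) = xs \<and>
   filter (\<lambda>e. \<not> f e) (interleave w xs ys) = ys"
proof (induction w arbitrary: xs ys)
  case Nil then show ?case by simp
next
  case (Cons c w)
  show ?case
  proof (cases c)
    case True
    then obtain x xs' where "xs = x # xs'" using Cons.prems by (cases xs) auto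
    then show ?thesis using Cons True by simp
  next
    case False
    then obtain y ys' where "ys = y # ys'" using Cons.prems by (cases ys) auto
    then show ?thesis using Cons False by simp
  qed
qed

lemma count_replicate_self[simp]: "count_list (replicate k c) c = k"
  by (induction k) auto

lemma count_replicate_other[simp]: "c \<noteq> d \<Longrightarrow> count_list (replicate k c) d = 0"
  by (induction k) auto

lemma count_map_True: "count_list (map f xs) True = length (filter f xs)"
  by (induction xs) auto

locale ctx =
  fixes L R :: "'a list" and SA SB :: "'a set"
  assumes fA: "finite SA" and fB: "finite SB" and dj: "SA \<inter> SB = {}"
begin

abbreviation "sL \<equiv> length L"
abbreviation "ca \<equiv> card SA"
abbreviation "cb \<equiv> card SB"
abbreviation "nn \<equiv> length L + card SA + card SB"

definition win :: "'a list \<Rightarrow> 'a list" where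
  "win T = take (ca + cb) (drop sL T)"

definition Cont :: "'a list \<Rightarrow> nat \<Rightarrow> nat \<Rightarrow> 'a list pmf" where
  "Cont T i j = bind_pmf (merge_loop1 T i j nn) (\<lambda>(T', i'). merge_loop2 T' sL i' nn)"

lemma cont_step:
  assumes A: "A \<in> permutations_of_set SA" and B: "B \<in> permutations_of_set SB"
    and x: "count_list w True \<le> ca" and y: "count_list w False \<le> cb"
  shows "Cont (build L R A B w) (sL + length w) (sL + ca + count_list w False) =
    bind_pmf fair_bit (\<lambda>c. if \<not> c then
        (if count_list w True = ca then merge_loop2 (build L R A B w) sL (sL + length w) nn
         else Cont (build L R A B (w @ [True])) (sL + length (w @ [True])) (sL + ca + count_list (w @ [True]) False))
      else
        (if count_list w False = cb then merge_loop2 (build L R A B w) sL (sL + length w) nn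
         else Cont (build L R (rot (count_list w True) A) B (w @ [False])) (sL + length (w @ [False]))
                  (sL + ca + count_list (w @ [False]) False)))"
proof -
  let ?x = "count_list w True" and ?y = "count_list w False"
  let ?T = "build L R A B w" and ?i = "sL + length w" and ?j = "sL + ca + ?y"
  have lA: "length A = ca" using A by (simp add: length_finite_permutations_of_set)
  have lB: "length B = cb" using B by (simp add: length_finite_permutations_of_set)
  have lw: "length w = ?x + ?y" using count_bool[of w] by simp
  have g1: "?i \<le> ?j" and g2: "?j \<le> nn" using lw x y by simp_all
  have "Cont ?T ?i ?j = bind_pmf fair_bit (\<lambda>b. bind_pmf
          (if \<not> b then (if ?i = ?j then return_pmf (?T, ?i) else merge_loop1 ?T (?i + 1) ?j nn)
           else (if ?j = nn then return_pmf (?T, ?i)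
             else merge_loop1 (list_swap ?T ?i ?j) (?i + 1) (?j + 1) nn))
          (\<lambda>(T', i'). merge_loop2 T' sL i' nn))"
    unfolding Cont_def by (subst merge_loop1.simps) (simp only: g1 g2 simp_thms if_True bind_assoc_pmf)
  also have "\<dots> = bind_pmf fair_bit (\<lambda>c. if \<not> c then
        (if count_list w True = ca then merge_loop2 (build L R A B w) sL (sL + length w) nn
         else Cont (build L R A B (w @ [True])) (sL + length (w @ [True])) (sL + ca + count_list (w @ [True]) False))
      else
        (if count_list w False = cb then merge_loop2 (build L R A B w) sL (sL + length w) nn
         else Cont (build L R (rot (count_list w True) A) B (w @ [False])) (sL + length (w @ [False]))
                  (sL + ca + count_list (w @ [False]) False)))"
  proof (rule bind_pmf_cong[OF refl])
    fix c :: bool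
    show "bind_pmf
          (if \<not> c then (if ?i = ?j then return_pmf (?T, ?i) else merge_loop1 ?T (?i + 1) ?j nn)
           else (if ?j = nn then return_pmf (?T, ?i)
             else merge_loop1 (list_swap ?T ?i ?j) (?i + 1) (?j + 1) nn))
          (\<lambda>(T', i'). merge_loop2 T' sL i' nn) =
      (if \<not> c then
        (if count_list w True = ca then merge_loop2 (build L R A B w) sL (sL + length w) nn
         else Cont (build L R A B (w @ [True])) (sL + length (w @ [True])) (sL + ca + count_list (w @ [True]) False))
      else
        (if count_list w False = cb then merge_loop2 (build L R A B w) sL (sL + length w) nn
         else Cont (build L R (rot (count_list w True) A) B (w @ [False])) (sL + length (w @ [False]))
                  (sL + ca + count_list (w @ [False]) False)))"
    proof (cases c)
      case False
      show ?thesis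
      proof (cases "?x = ca")
        case True
        then show ?thesis using False lw by (simp add: bind_return_pmf)
      next
        case xa: False
        have "build L R A B (w @ [True]) = ?T" using build_True[of w A B L R] xa x lA lB y by simp
        then show ?thesis using False xa lw by (simp add: Cont_def)
      qed
    next
      case True
      show ?thesis
      proof (cases "?y = cb")
        case yb: True
        then show ?thesis using True by (simp add: bind_return_pmf)
      next
        case yb: False
        have "list_swap ?T ?i (sL + length A + ?y) = build L R (rot ?x A) B (w @ [False])"
          using build_False[of w A B L R] yb x lA lB y by simp
        then show ?thesis using True yb lA by (simp add: Cont_def add.assoc)
      qed
    qed
  qed
  finally show ?thesis .
qed


definition Psi :: "bool list \<Rightarrow> 'a list pmf" where
  "Psi w = map_pmf win (bind_pmf (shuffled SA) (\<lambda>A. bind_pmf (shuffled SB) (\<lambda>B.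
      Cont (build L R A B w) (sL + length w) (sL + ca + count_list w False))))"

definition Stop :: "bool list \<Rightarrow> 'a list pmf" where
  "Stop w = map_pmf win (bind_pmf (shuffled SA) (\<lambda>A. bind_pmf (shuffled SB) (\<lambda>B.
      merge_loop2 (build L R A B w) sL (sL + length w) nn)))"

lemma set_shuffled: "finite S \<Longrightarrow> set_pmf (shuffled S) = permutations_of_set S"
  unfolding shuffled_def by simp

lemma Psi_rec:
  assumes x: "count_list w True \<le> ca" and y: "count_list w False \<le> cb"
  shows "Psi w = bind_pmf fair_bit (\<lambda>c. if \<not> c then
      (if count_list w True = ca then Stop w else Psi (w @ [True]))
    else (if count_list w False = cb then Stop w else Psi (w @ [False])))"
proof -
  define G where "G = (\<lambda>c A B. if \<not> c then
        (if count_list w True = ca then merge_loop2 (build L R A B w) sL (sL + length w) nn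
         else Cont (build L R A B (w @ [True])) (sL + length (w @ [True])) (sL + ca + count_list (w @ [True]) False))
      else
        (if count_list w False = cb then merge_loop2 (build L R A B w) sL (sL + length w) nn
         else Cont (build L R (rot (count_list w True) A) B (w @ [False])) (sL + length (w @ [False]))
                  (sL + ca + count_list (w @ [False]) False)))"
  have "Psi w = map_pmf win (bind_pmf (shuffled SA) (\<lambda>A. bind_pmf (shuffled SB) (\<lambda>B.
      bind_pmf fair_bit (\<lambda>c. G c A B))))"
    unfolding Psi_def
  proof (intro arg_cong[where f="map_pmf win"] bind_pmf_cong refl)
    fix A B assume "A \<in> set_pmf (shuffled SA)" "B \<in> set_pmf (shuffled SB)"
    hence "A \<in> permutations_of_set SA" "B \<in> permutations_of_set SB"
      using fA fB by (simp_all add: set_shuffled)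
    thus "Cont (build L R A B w) (sL + length w) (sL + ca + count_list w False) =
          bind_pmf fair_bit (\<lambda>c. G c A B)"
      unfolding G_def by (rule cont_step[OF _ _ x y])
  qed
  also have "\<dots> = map_pmf win (bind_pmf fair_bit (\<lambda>c. bind_pmf (shuffled SA) (\<lambda>A.
       bind_pmf (shuffled SB) (\<lambda>B. G c A B))))"
  proof -
    have "\<And>A. bind_pmf (shuffled SB) (\<lambda>B. bind_pmf fair_bit (\<lambda>c. G c A B)) =
              bind_pmf fair_bit (\<lambda>c. bind_pmf (shuffled SB) (\<lambda>B. G c A B))"
      by (rule bind_commute_pmf)
    hence "bind_pmf (shuffled SA) (\<lambda>A. bind_pmf (shuffled SB) (\<lambda>B. bind_pmf fair_bit (\<lambda>c. G c A B)))
       = bind_pmf (shuffled SA) (\<lambda>A. bind_pmf fair_bit (\<lambda>c. bind_pmf (shuffled SB) (\<lambda>B. G c A B)))"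
      by simp
    also have "\<dots> = bind_pmf fair_bit (\<lambda>c. bind_pmf (shuffled SA) (\<lambda>A.
       bind_pmf (shuffled SB) (\<lambda>B. G c A B)))"
      by (rule bind_commute_pmf)
    finally show ?thesis by simp
  qed
  also have "\<dots> = bind_pmf fair_bit (\<lambda>c. map_pmf win (bind_pmf (shuffled SA) (\<lambda>A.
       bind_pmf (shuffled SB) (\<lambda>B. G c A B))))"
    by (simp add: map_bind_pmf)
  also have "\<dots> = bind_pmf fair_bit (\<lambda>c. if \<not> c then
      (if count_list w True = ca then Stop w else Psi (w @ [True]))
    else (if count_list w False = cb then Stop w else Psi (w @ [False])))"
  proof (rule bind_pmf_cong[OF refl])
    fix c :: bool
    show "map_pmf win (bind_pmf (shuffled SA) (\<lambda>A. bind_pmf (shuffled SB) (\<lambda>B. G c A B))) =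
      (if \<not> c then (if count_list w True = ca then Stop w else Psi (w @ [True]))
       else (if count_list w False = cb then Stop w else Psi (w @ [False])))"
    proof (cases c)
      case False
      then show ?thesis by (cases "count_list w True = ca") (simp_all add: G_def Stop_def Psi_def)
    next
      case True
      show ?thesis
      proof (cases "count_list w False = cb")
        case True
        then show ?thesis using \<open>c\<close> by (simp add: G_def Stop_def)
      next
        case False
        define K where "K = (\<lambda>A. bind_pmf (shuffled SB) (\<lambda>B. Cont (build L R A B (w @ [False]))
                 (sL + length (w @ [False])) (sL + ca + count_list (w @ [False]) False)))"
        have "bind_pmf (shuffled SA) (\<lambda>A. K (rot (count_list w True) A)) =
              bind_pmf (map_pmf (rot (count_list w True)) (shuffled SA)) K"
          by (simp add: bind_map_pmf)
        also have "\<dots> = bind_pmf (shuffled SA) K"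
          using rot_shuffle[OF fA] by (simp add: shuffled_def)
        finally have "bind_pmf (shuffled SA) (\<lambda>A. K (rot (count_list w True) A)) =
              bind_pmf (shuffled SA) K" .
        then show ?thesis using \<open>c\<close> False by (simp add: G_def Psi_def K_def)
      qed
    qed
  qed
  finally show ?thesis .
qed


lemma Avg:
  assumes x: "x \<le> ca" and y: "y \<le> cb"
  shows "bind_pmf (pmf_of_set {w. length w = x + y \<and> count_list w True = x}) Stop
         = shuffled (SA \<union> SB)"
proof -
  define W where "W = {w :: bool list. length w = x + y \<and> count_list w True = x}"
  define PA where "PA = permutations_of_set SA"
  define PB where "PB = permutations_of_set SB"
  define D3 where "D3 = W \<times> (PA \<times> PB)"
  define \<Phi> where "\<Phi> = (\<lambda>(w :: bool list, A :: 'a list, B :: 'a list). (drop x A @ drop y B, interleave w (take x A) (take y B)))"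
  define S where "S = SA \<union> SB"
  define I where "I = \<Phi> ` D3"
  define Zs where "Zs = fst ` I"
  define F where "F = (\<lambda>Z. permutations_of_set (S - set Z))"
  define G where "G = (\<lambda>(Z, P). merge_loop2 (L @ P @ Z @ R) sL (sL + (x + y)) nn)"
  have fS: "finite S" using fA fB S_def by simp
  have W_y: "\<And>w. w \<in> W \<Longrightarrow> count_list w False = y"
  proof -
    fix w assume "w \<in> W"
    thus "count_list w False = y" using count_bool[of w] by (simp add: W_def)
  qed
  have W_fin: "finite W"
  proof -
    have "W \<subseteq> {w. set w \<subseteq> UNIV \<and> length w = x + y}" by (auto simp: W_def)
    thus ?thesis using finite_lists_length_eq[of "UNIV :: bool set" "x + y"] finite_subset by auto
  qed
  have W_ne: "replicate x True @ replicate y False \<in> W" by (simp add: W_def)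
  have lA: "\<And>A. A \<in> PA \<Longrightarrow> length A = ca" by (simp add: PA_def length_finite_permutations_of_set)
  have lB: "\<And>B. B \<in> PB \<Longrightarrow> length B = cb" by (simp add: PB_def length_finite_permutations_of_set)
  have AB: "\<And>A B. A \<in> PA \<Longrightarrow> B \<in> PB \<Longrightarrow> A @ B \<in> permutations_of_set S"
    using dj by (auto simp: PA_def PB_def S_def permutations_of_set_def)
  have key: "snd (\<Phi> (w, A, B)) @ fst (\<Phi> (w, A, B)) \<in> permutations_of_set S"
    and keyl: "length (snd (\<Phi> (w, A, B))) = x + y"
    and keym: "mset (snd (\<Phi> (w, A, B))) = mset (take x A) + mset (take y B)"
    if "(w, A, B) \<in> D3" for w A B
  proof -
    have w: "w \<in> W" and A: "A \<in> PA" and B: "B \<in> PB" using that D3_def by auto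
    have cnt: "length (take x A) = count_list w True" "length (take y B) = count_list w False"
      using w W_y W_def lA[OF A] lB[OF B] x y by auto
    show m: "mset (snd (\<Phi> (w, A, B))) = mset (take x A) + mset (take y B)"
      unfolding \<Phi>_def using mset_interleave[OF cnt] by simp
    have "mset (snd (\<Phi> (w, A, B)) @ fst (\<Phi> (w, A, B))) = mset (A @ B)"
    proof -
      have "mset (take x A) + mset (drop x A) = mset A"
        using mset_append[of "take x A" "drop x A"] by simp
      moreover have "mset (take y B) + mset (drop y B) = mset B"
        using mset_append[of "take y B" "drop y B"] by simp
      ultimately show ?thesis using m unfolding \<Phi>_def
        by (simp add: algebra_simps)
    qed
    thus "snd (\<Phi> (w, A, B)) @ fst (\<Phi> (w, A, B)) \<in> permutations_of_set S"
      using perm_mset AB[OF A B] by blast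
    show "length (snd (\<Phi> (w, A, B))) = x + y" using w W_def \<Phi>_def by simp
  qed
  have I_sub: "I \<subseteq> Sigma Zs F"
  proof
    fix q assume q: "q \<in> I"
    then obtain w A B where d: "(w, A, B) \<in> D3" and qe: "q = \<Phi> (w, A, B)" by (auto simp: I_def)
    have "snd q @ fst q \<in> permutations_of_set S" using key[OF d] qe by simp
    hence "snd q \<in> F (fst q)" unfolding F_def permutations_of_set_def by auto
    moreover have "fst q \<in> Zs" using q Zs_def by auto
    ultimately show "q \<in> Sigma Zs F" by (cases q) auto
  qed
  have sub_I: "Sigma Zs F \<subseteq> I"
  proof
    fix q assume "q \<in> Sigma Zs F"
    then obtain Z P' where qq: "q = (Z, P')" and Z: "Z \<in> Zs" and P': "P' \<in> F Z" by auto
    obtain w A B where d: "(w, A, B) \<in> D3" and Ze: "Z = fst (\<Phi> (w, A, B))"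
      using Z by (auto simp: Zs_def I_def)
    have w: "w \<in> W" and A: "A \<in> PA" and B: "B \<in> PB" using d D3_def by auto
    define P where "P = snd (\<Phi> (w, A, B))"
    have PZ: "P @ Z \<in> permutations_of_set S" using key[OF d] Ze P_def by simp
    have "set P = S - set Z" "distinct P"
      using PZ unfolding permutations_of_set_def by auto
    moreover have "set P' = S - set Z" "distinct P'" using P' unfolding F_def permutations_of_set_def by auto
    ultimately have mP: "mset P' = mset P" using set_eq_iff_mset_eq_distinct[of P' P] by simp
    define f where "f = (\<lambda>e. e \<in> SA)"
    have tA: "\<forall>e\<in>set (take x A). f e" using A f_def PA_def
      by (auto simp: permutations_of_set_def dest: in_set_takeD)
    have tB: "\<forall>e\<in>set (take y B). \<not> f e" using B f_def PB_def dj
      by (auto simp: permutations_of_set_def dest: in_set_takeD)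
    have mf: "mset (filter f P') = mset (take x A)"
    proof -
      have "mset (filter f P') = filter_mset f (mset P)" using mP by simp
      also have "\<dots> = filter_mset f (mset (take x A)) + filter_mset f (mset (take y B))"
        using keym[OF d] P_def by simp
      also have "\<dots> = mset (take x A)"
        using tA tB by (simp flip: mset_filter add: filter_True filter_False)
      finally show ?thesis .
    qed
    have mg: "mset (filter (\<lambda>e. \<not> f e) P') = mset (take y B)"
    proof -
      have "mset (filter (\<lambda>e. \<not> f e) P') = filter_mset (\<lambda>e. \<not> f e) (mset P)" using mP by simp
      also have "\<dots> = filter_mset (\<lambda>e. \<not> f e) (mset (take x A)) + filter_mset (\<lambda>e. \<not> f e) (mset (take y B))"
        using keym[OF d] P_def by simp
      also have "\<dots> = mset (take y B)"
        using tA tB by (simp flip: mset_filter add: filter_True filter_False)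
      finally show ?thesis .
    qed
    have lf: "length (filter f P') = x"
    proof -
      have "length (filter f P') = length (take x A)" using arg_cong[OF mf, of size] by (simp only: size_mset)
      thus ?thesis using lA[OF A] x by simp
    qed
    have lg: "length (filter (\<lambda>e. \<not> f e) P') = y"
    proof -
      have "length (filter (\<lambda>e. \<not> f e) P') = length (take y B)" using arg_cong[OF mg, of size] by (simp only: size_mset)
      thus ?thesis using lB[OF B] y by simp
    qed
    define w' where "w' = map f P'"
    define A' where "A' = filter f P' @ drop x A"
    define B' where "B' = filter (\<lambda>e. \<not> f e) P' @ drop y B"
    have "mset A' = mset A"
    proof -
      have "mset A = mset (take x A) + mset (drop x A)"
        using mset_append[of "take x A" "drop x A"] by simp
      thus ?thesis unfolding A'_def using mf by simp
    qed
    hence A': "A' \<in> PA" using perm_mset A PA_def by blast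
    have "mset B' = mset B"
    proof -
      have "mset B = mset (take y B) + mset (drop y B)"
        using mset_append[of "take y B" "drop y B"] by simp
      thus ?thesis unfolding B'_def using mg by simp
    qed
    hence B': "B' \<in> PB" using perm_mset B PB_def by blast
    have "length P' = x + y" using arg_cong[OF mP, of size] keyl[OF d] P_def by simp
    hence w': "w' \<in> W" using lf by (simp add: W_def w'_def count_map_True)
    have "\<Phi> (w', A', B') = (Z, P')"
      using lf lg Ze by (simp add: \<Phi>_def A'_def B'_def w'_def interleave_filter)
    thus "q \<in> I" using A' B' w' qq by (force simp: I_def D3_def)
  qed
  have I_eq: "I = Sigma Zs F" using I_sub sub_I by blast
  have inj: "inj_on \<Phi> D3"
  proof (rule inj_onI)
    fix p1 p2 assume p1: "p1 \<in> D3" and p2: "p2 \<in> D3" and e: "\<Phi> p1 = \<Phi> p2"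
    obtain w A B where pp1: "p1 = (w, A, B)" by (cases p1) auto
    obtain w' A' B' where pp2: "p2 = (w', A', B')" by (cases p2) auto
    have d1: "w \<in> W" "A \<in> PA" "B \<in> PB" using p1 pp1 D3_def by auto
    have d2: "w' \<in> W" "A' \<in> PA" "B' \<in> PB" using p2 pp2 D3_def by auto
    define f where "f = (\<lambda>e. e \<in> SA)"
    have props: "map f (interleave w (take x A) (take y B)) = w \<and>
       filter f (interleave w (take x A) (take y B)) = take x A \<and>
       filter (\<lambda>e. \<not> f e) (interleave w (take x A) (take y B)) = take y B"
      if "w \<in> W" "A \<in> PA" "B \<in> PB" for w A B
    proof (rule interleave_props)
      show "length (take x A) = count_list w True" using that W_def lA x by auto
      show "length (take y B) = count_list w False" using that W_y lB y by auto
      show "\<forall>e\<in>set (take x A). f e" using that f_def PA_def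
        by (auto simp: permutations_of_set_def dest: in_set_takeD)
      show "\<forall>e\<in>set (take y B). \<not> f e" using that f_def PB_def dj
        by (auto simp: permutations_of_set_def dest: in_set_takeD)
    qed
    have e1: "drop x A @ drop y B = drop x A' @ drop y B'"
      and e2: "interleave w (take x A) (take y B) = interleave w' (take x A') (take y B')"
      using e pp1 pp2 \<Phi>_def by auto
    have "length (drop x A) = length (drop x A')" using lA d1 d2 by simp
    hence dd: "drop x A = drop x A'" "drop y B = drop y B'" using e1 by auto
    have a1: "map f (interleave w (take x A) (take y B)) = w"
      and b1: "filter f (interleave w (take x A) (take y B)) = take x A"
      and c1: "filter (\<lambda>e. \<not> f e) (interleave w (take x A) (take y B)) = take y B"
      using props[OF d1] by auto
    have a2: "map f (interleave w' (take x A') (take y B')) = w'"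
      and b2: "filter f (interleave w' (take x A') (take y B')) = take x A'"
      and c2: "filter (\<lambda>e. \<not> f e) (interleave w' (take x A') (take y B')) = take y B'"
      using props[OF d2] by auto
    have "w = w'" using a1 a2 e2 by simp
    moreover have "take x A = take x A'" using b1 b2 e2 by simp
    moreover have "take y B = take y B'" using c1 c2 e2 by simp
    ultimately have "w = w'" "take x A = take x A'" "take y B = take y B'" by auto
    thus "p1 = p2" using dd pp1 pp2 by (metis append_take_drop_id)
  qed
  have PA_ne: "PA \<noteq> {}" "finite PA" using fA PA_def by auto
  have PB_ne: "PB \<noteq> {}" "finite PB" using fB PB_def by auto
  have D3_ne: "D3 \<noteq> {}" "finite D3" using W_ne W_fin PA_ne PB_ne D3_def by auto
  have sa: "bind_pmf (pmf_of_set W) Stop = map_pmf win (bind_pmf (pmf_of_set D3) (\<lambda>(w, A, B).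
      merge_loop2 (build L R A B w) sL (sL + (x + y)) nn))"
  proof -
    have "bind_pmf (pmf_of_set W) Stop = bind_pmf (pmf_of_set W) (\<lambda>w. map_pmf win
        (bind_pmf (pmf_of_set PA) (\<lambda>A. bind_pmf (pmf_of_set PB) (\<lambda>B.
          merge_loop2 (build L R A B w) sL (sL + (x + y)) nn))))"
    proof (rule bind_pmf_cong[OF refl])
      fix w assume "w \<in> set_pmf (pmf_of_set W)"
      hence "w \<in> W" using W_fin W_ne by (subst (asm) set_pmf_of_set) auto
      thus "Stop w = map_pmf win
        (bind_pmf (pmf_of_set PA) (\<lambda>A. bind_pmf (pmf_of_set PB) (\<lambda>B.
          merge_loop2 (build L R A B w) sL (sL + (x + y)) nn)))"
        by (simp add: Stop_def W_def shuffled_def PA_def PB_def)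
    qed
    also have "\<dots> = map_pmf win (bind_pmf (pmf_of_set D3) (\<lambda>(w, A, B).
      merge_loop2 (build L R A B w) sL (sL + (x + y)) nn))"
      unfolding D3_def using W_fin W_ne PA_ne PB_ne
      by (subst pmf_of_set_times, blast, blast, blast, blast,
          subst pmf_of_set_times, simp_all add: map_bind_pmf bind_map_pmf bind_assoc_pmf)
    finally show ?thesis .
  qed
  have sb: "bind_pmf (pmf_of_set D3) (\<lambda>(w, A, B). merge_loop2 (build L R A B w) sL (sL + (x + y)) nn)
     = bind_pmf (pmf_of_set D3) (\<lambda>p. G (\<Phi> p))"
  proof (rule bind_pmf_cong[OF refl])
    fix p assume "p \<in> set_pmf (pmf_of_set D3)"
    hence p: "p \<in> D3" using D3_ne by simp
    obtain w A B where pp: "p = (w, A, B)" by (cases p) auto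
    have d: "w \<in> W" "A \<in> PA" "B \<in> PB" using p pp D3_def by auto
    have "build L R A B w = L @ snd (\<Phi> (w, A, B)) @ fst (\<Phi> (w, A, B)) @ R"
      using d W_def W_y unfolding build_def \<Phi>_def by simp
    thus "(case p of (w, A, B) \<Rightarrow> merge_loop2 (build L R A B w) sL (sL + (x + y)) nn) = G (\<Phi> p)"
      using pp by (simp add: G_def split: prod.splits)
  qed
  have sc: "bind_pmf (pmf_of_set D3) (\<lambda>p. G (\<Phi> p)) = bind_pmf (pmf_of_set (Sigma Zs F)) G"
  proof -
    have "bind_pmf (pmf_of_set D3) (\<lambda>p. G (\<Phi> p)) = bind_pmf (map_pmf \<Phi> (pmf_of_set D3)) G"
      by (simp add: bind_map_pmf)
    also have "\<dots> = bind_pmf (pmf_of_set I) G"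
      using map_pmf_of_set_inj[OF inj D3_ne] I_def by simp
    finally show ?thesis using I_eq by simp
  qed
  have Zfacts: "card (S - set Z) = x + y \<and> length Z = (ca - x) + (cb - y) \<and> distinct Z \<and> set Z \<subseteq> S"
    if Z: "Z \<in> Zs" for Z
  proof -
    obtain w A B where d: "(w, A, B) \<in> D3" and Ze: "Z = fst (\<Phi> (w, A, B))"
      using Z by (auto simp: Zs_def I_def)
    have dd: "A \<in> PA" "B \<in> PB" using d D3_def by auto
    define P where "P = snd (\<Phi> (w, A, B))"
    have PZ: "P @ Z \<in> permutations_of_set S" using key[OF d] Ze P_def by simp
    have "set P = S - set Z" "distinct P" "distinct Z" "set Z \<subseteq> S"
      using PZ unfolding permutations_of_set_def by auto
    moreover have "length P = x + y" using keyl[OF d] P_def by simp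
    moreover have "length Z = (ca - x) + (cb - y)" using Ze lA lB dd \<Phi>_def by simp
    ultimately show ?thesis by (metis distinct_card)
  qed
  have Zs_ne: "Zs \<noteq> {}" "finite Zs" using D3_ne by (auto simp: Zs_def I_def)
  have sd: "bind_pmf (pmf_of_set (Sigma Zs F)) G =
      bind_pmf (pmf_of_set Zs) (\<lambda>Z. bind_pmf (pmf_of_set (F Z)) (\<lambda>P. G (Z, P)))"
    using Zs_ne Zfacts
    by (subst pmf_of_set_Sigma[where c="fact (x + y)"])
       (simp_all add: F_def fS bind_assoc_pmf bind_map_pmf bind_return_pmf)
  have se: "map_pmf win (bind_pmf (pmf_of_set (F Z)) (\<lambda>P. G (Z, P))) = shuffled S"
    if Z: "Z \<in> Zs" for Z
  proof -
    have zf: "card (S - set Z) = x + y" "length Z = (ca - x) + (cb - y)" "distinct Z" "set Z \<subseteq> S"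
      using Zfacts[OF Z] by auto
    have "map_pmf (\<lambda>T. take (card (S - set Z) + length Z) (drop (length L) T))
     (bind_pmf (pmf_of_set (permutations_of_set (S - set Z)))
        (\<lambda>P. merge_loop2 (L @ P @ Z @ R) (length L) (length L + card (S - set Z))
                 (length L + card (S - set Z) + length Z)))
      = pmf_of_set (permutations_of_set ((S - set Z) \<union> set Z))"
      by (rule loop2_shuffle) (use fS zf in auto)
    moreover have "(S - set Z) \<union> set Z = S" using zf by auto
    moreover have "card (S - set Z) + length Z = ca + cb" using zf x y by simp
    moreover have wd: "win = (\<lambda>T. take (ca + cb) (drop sL T))" by (rule ext) (simp add: win_def)
    ultimately show ?thesis using zf by (simp add: G_def F_def shuffled_def add.assoc)
  qed
  have "bind_pmf (pmf_of_set W) Stop =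
      bind_pmf (pmf_of_set Zs) (\<lambda>Z. map_pmf win (bind_pmf (pmf_of_set (F Z)) (\<lambda>P. G (Z, P))))"
    using sa sb sc sd by (simp add: map_bind_pmf)
  also have "\<dots> = bind_pmf (pmf_of_set Zs) (\<lambda>Z. shuffled S)"
    by (rule bind_pmf_cong[OF refl]) (use se Zs_ne in simp)
  finally show ?thesis using S_def W_def by simp
qed


lemma alg_step:
  fixes p n0 n1 a b S u :: real
  assumes "p > 0" "n0 = (n1 + a + b) / 2"
  shows "(S + (a + b) * u) / 2 / p + (1 - n0 / p) * u = S / (2 * p) + (1 - n1 / (2 * p)) * u"
  unfolding assms(2) using assms(1) by (simp add: field_simps)

definition Pt :: "nat \<Rightarrow> bool list set" where
  "Pt t = {w. length w = t \<and> count_list w True \<le> ca \<and> count_list w False \<le> cb}"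

lemma Pt_finite: "finite (Pt t)"
proof -
  have "Pt t \<subseteq> {w. set w \<subseteq> UNIV \<and> length w = t}" by (auto simp: Pt_def)
  thus ?thesis using finite_lists_length_eq[of "UNIV :: bool set" t] finite_subset by auto
qed

lemma Pt_Suc: "Pt (Suc t) = (\<lambda>w. w @ [True]) ` {w\<in>Pt t. count_list w True < ca}
                         \<union> (\<lambda>w. w @ [False]) ` {w\<in>Pt t. count_list w False < cb}"
proof
  show "Pt (Suc t) \<subseteq> (\<lambda>w. w @ [True]) ` {w\<in>Pt t. count_list w True < ca}
                         \<union> (\<lambda>w. w @ [False]) ` {w\<in>Pt t. count_list w False < cb}"
  proof
    fix w' assume w': "w' \<in> Pt (Suc t)"
    hence "w' \<noteq> []" by (auto simp: Pt_def)
    then obtain w c where wc: "w' = w @ [c]" by (metis append_butlast_last_id)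
    show "w' \<in> (\<lambda>w. w @ [True]) ` {w\<in>Pt t. count_list w True < ca}
                         \<union> (\<lambda>w. w @ [False]) ` {w\<in>Pt t. count_list w False < cb}"
      using w' wc by (cases c) (auto simp: Pt_def)
  qed
  show "(\<lambda>w. w @ [True]) ` {w\<in>Pt t. count_list w True < ca}
                         \<union> (\<lambda>w. w @ [False]) ` {w\<in>Pt t. count_list w False < cb} \<subseteq> Pt (Suc t)"
    by (auto simp: Pt_def)
qed

lemma Pt_empty: "Pt (Suc (ca + cb)) = {}"
proof -
  { fix w assume "w \<in> Pt (Suc (ca + cb))"
    hence False using count_bool[of w] by (simp add: Pt_def) }
  thus ?thesis by blast
qed

lemma Pt_0: "Pt 0 = {[]}"
  by (auto simp: Pt_def)

lemma avg_sum:
  "(\<Sum>w\<in>{w\<in>Pt t. count_list w True = x \<and> count_list w False = y}. pmf (Stop w) z)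
     = card {w\<in>Pt t. count_list w True = x \<and> count_list w False = y} * pmf (shuffled (SA \<union> SB)) z"
proof (cases "x \<le> ca \<and> y \<le> cb \<and> x + y = t")
  case True
  define W where "W = {w :: bool list. length w = x + y \<and> count_list w True = x}"
  have eq: "{w\<in>Pt t. count_list w True = x \<and> count_list w False = y} = W"
  proof (rule set_eqI)
    fix w show "w \<in> {w\<in>Pt t. count_list w True = x \<and> count_list w False = y} \<longleftrightarrow> w \<in> W"
      using True count_bool[of w] by (auto simp: Pt_def W_def)
  qed
  have "W \<subseteq> Pt t" using eq by blast
  hence fW: "finite W" using Pt_finite finite_subset by blast
  have neW: "W \<noteq> {}"
  proof -
    have "replicate x True @ replicate y False \<in> W" by (simp add: W_def)
    thus ?thesis by auto
  qed
  have "pmf (bind_pmf (pmf_of_set W) Stop) z = pmf (shuffled (SA \<union> SB)) z"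
    using Avg[of x y] True W_def by simp
  hence "(\<Sum>w\<in>W. pmf (Stop w) z) / card W = pmf (shuffled (SA \<union> SB)) z"
    using fW neW by (simp add: pmf_bind_pmf_of_set)
  hence "(\<Sum>w\<in>W. pmf (Stop w) z) = card W * pmf (shuffled (SA \<union> SB)) z"
    using fW neW by (simp add: field_simps card_gt_0_iff)
  thus ?thesis using eq by simp
next
  case False
  have "{w\<in>Pt t. count_list w True = x \<and> count_list w False = y} = {}"
  proof -
    { fix w assume "w \<in> {w\<in>Pt t. count_list w True = x \<and> count_list w False = y}"
      hence False using False count_bool[of w] by (auto simp: Pt_def) }
    thus ?thesis by blast
  qed
  hence E: "{w\<in>Pt t. count_list w True = x \<and> count_list w False = y} = {}" .
  show ?thesis unfolding E by simp
qed

lemma fair_bit_pmf: "pmf (bind_pmf fair_bit g) z = (pmf (g False) z + pmf (g True) z) / 2"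
  unfolding fair_bit_def bernoulli_pmf_half_conv_pmf_of_set
  by (subst pmf_bind_pmf_of_set) (auto simp: UNIV_bool)

lemma sum_step:
  "(\<Sum>w\<in>Pt t. pmf (Psi w) z) =
     ((\<Sum>w\<in>Pt (Suc t). pmf (Psi w) z)
      + (card {w\<in>Pt t. count_list w True = ca} + card {w\<in>Pt t. count_list w False = cb})
        * pmf (shuffled (SA \<union> SB)) z) / 2"
proof -
  let ?u = "pmf (shuffled (SA \<union> SB)) z"
  let ?A = "{w\<in>Pt t. count_list w True = ca}" and ?B = "{w\<in>Pt t. count_list w False = cb}"
  let ?A' = "{w\<in>Pt t. count_list w True < ca}" and ?B' = "{w\<in>Pt t. count_list w False < cb}"
  have fin: "finite (Pt t)" by (rule Pt_finite)
  have ps: "pmf (Psi w) z = ((if count_list w True = ca then pmf (Stop w) z else pmf (Psi (w @ [True])) z)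
          + (if count_list w False = cb then pmf (Stop w) z else pmf (Psi (w @ [False])) z)) / 2"
    if "w \<in> Pt t" for w
    using that Psi_rec[of w] by (simp add: Pt_def fair_bit_pmf)
  have "(\<Sum>w\<in>Pt t. pmf (Psi w) z) = ((\<Sum>w\<in>Pt t. (if count_list w True = ca then pmf (Stop w) z else pmf (Psi (w @ [True])) z))
      + (\<Sum>w\<in>Pt t. (if count_list w False = cb then pmf (Stop w) z else pmf (Psi (w @ [False])) z))) / 2"
  proof -
    have "(\<Sum>w\<in>Pt t. pmf (Psi w) z) = (\<Sum>w\<in>Pt t. ((if count_list w True = ca then pmf (Stop w) z else pmf (Psi (w @ [True])) z)
      + (if count_list w False = cb then pmf (Stop w) z else pmf (Psi (w @ [False])) z)) / 2)"
      by (rule sum.cong) (use ps in auto)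
    thus ?thesis by (simp only: sum_divide_distrib[symmetric] sum.distrib)
  qed
  also have "(\<Sum>w\<in>Pt t. (if count_list w True = ca then pmf (Stop w) z else pmf (Psi (w @ [True])) z))
      = (\<Sum>w\<in>?A. pmf (Stop w) z) + (\<Sum>w\<in>?A'. pmf (Psi (w @ [True])) z)"
  proof -
    have "?A = Pt t \<inter> {w. count_list w True = ca}" by auto
    moreover have "?A' = Pt t \<inter> - {w. count_list w True = ca}" by (auto simp: Pt_def)
    ultimately show ?thesis using fin by (simp add: sum.If_cases)
  qed
  also have "(\<Sum>w\<in>Pt t. (if count_list w False = cb then pmf (Stop w) z else pmf (Psi (w @ [False])) z))
      = (\<Sum>w\<in>?B. pmf (Stop w) z) + (\<Sum>w\<in>?B'. pmf (Psi (w @ [False])) z)"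
  proof -
    have "?B = Pt t \<inter> {w. count_list w False = cb}" by auto
    moreover have "?B' = Pt t \<inter> - {w. count_list w False = cb}" by (auto simp: Pt_def)
    ultimately show ?thesis using fin by (simp add: sum.If_cases)
  qed
  also have "(\<Sum>w\<in>?A. pmf (Stop w) z) = card ?A * ?u"
  proof -
    have "?A = {w\<in>Pt t. count_list w True = ca \<and> count_list w False = t - ca}"
    proof (rule set_eqI)
      fix w show "w \<in> ?A \<longleftrightarrow> w \<in> {w\<in>Pt t. count_list w True = ca \<and> count_list w False = t - ca}"
        using count_bool[of w] by (auto simp: Pt_def)
    qed
    thus ?thesis using avg_sum[where t=t and x=ca and y="t - ca" and z=z] by simp
  qed
  also have "(\<Sum>w\<in>?B. pmf (Stop w) z) = card ?B * ?u"
  proof -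
    have "?B = {w\<in>Pt t. count_list w True = t - cb \<and> count_list w False = cb}"
    proof (rule set_eqI)
      fix w show "w \<in> ?B \<longleftrightarrow> w \<in> {w\<in>Pt t. count_list w True = t - cb \<and> count_list w False = cb}"
        using count_bool[of w] by (auto simp: Pt_def)
    qed
    thus ?thesis using avg_sum[where t=t and x="t - cb" and y=cb and z=z] by simp
  qed
  also have "(\<Sum>w\<in>?A'. pmf (Psi (w @ [True])) z) + (\<Sum>w\<in>?B'. pmf (Psi (w @ [False])) z)
      = (\<Sum>w\<in>Pt (Suc t). pmf (Psi w) z)"
  proof -
    have d: "(\<lambda>w. w @ [True]) ` ?A' \<inter> (\<lambda>w. w @ [False]) ` ?B' = {}" by auto
    have f1: "finite ((\<lambda>w. w @ [True]) ` ?A')" "finite ((\<lambda>w. w @ [False]) ` ?B')"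
      using fin by auto
    have "(\<Sum>w\<in>Pt (Suc t). pmf (Psi w) z) =
       (\<Sum>w\<in>(\<lambda>w. w @ [True]) ` ?A'. pmf (Psi w) z) + (\<Sum>w\<in>(\<lambda>w. w @ [False]) ` ?B'. pmf (Psi w) z)"
      unfolding Pt_Suc by (rule sum.union_disjoint[OF f1 d])
    also have "\<dots> = (\<Sum>w\<in>?A'. pmf (Psi (w @ [True])) z) + (\<Sum>w\<in>?B'. pmf (Psi (w @ [False])) z)"
      by (subst sum.reindex, simp add: inj_on_def, subst sum.reindex, simp_all add: inj_on_def)
    finally show ?thesis by simp
  qed
  ultimately show ?thesis by (simp add: algebra_simps add_divide_distrib)
qed

lemma card_step:
  "card (Pt (Suc t)) + card {w\<in>Pt t. count_list w True = ca} + card {w\<in>Pt t. count_list w False = cb}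
     = 2 * card (Pt t)"
proof -
  let ?A = "{w\<in>Pt t. count_list w True = ca}" and ?B = "{w\<in>Pt t. count_list w False = cb}"
  let ?A' = "{w\<in>Pt t. count_list w True < ca}" and ?B' = "{w\<in>Pt t. count_list w False < cb}"
  have fin: "finite (Pt t)" by (rule Pt_finite)
  have "card (Pt (Suc t)) = card ((\<lambda>w. w @ [True]) ` ?A') + card ((\<lambda>w. w @ [False]) ` ?B')"
    unfolding Pt_Suc by (rule card_Un_disjoint) (use fin in auto)
  also have "\<dots> = card ?A' + card ?B'"
    by (simp add: card_image inj_on_def)
  finally have c1: "card (Pt (Suc t)) = card ?A' + card ?B'" .
  have "Pt t = ?A \<union> ?A'" by (auto simp: Pt_def)
  moreover have "card (?A \<union> ?A') = card ?A + card ?A'"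
    by (rule card_Un_disjoint) (use fin in auto)
  ultimately have c2: "card (Pt t) = card ?A + card ?A'" by simp
  have "Pt t = ?B \<union> ?B'" by (auto simp: Pt_def)
  moreover have "card (?B \<union> ?B') = card ?B + card ?B'"
    by (rule card_Un_disjoint) (use fin in auto)
  ultimately have c3: "card (Pt t) = card ?B + card ?B'" by simp
  show ?thesis using c1 c2 c3 by simp
qed

lemma claim:
  "pmf (Psi []) z = (\<Sum>w\<in>Pt t. pmf (Psi w) z) / 2 ^ t
      + (1 - card (Pt t) / 2 ^ t) * pmf (shuffled (SA \<union> SB)) z"
proof (induction t)
  case 0
  then show ?case by (simp add: Pt_0)
next
  case (Suc t)
  let ?u = "pmf (shuffled (SA \<union> SB)) z"
  let ?cA = "card {w\<in>Pt t. count_list w True = ca}" and ?cB = "card {w\<in>Pt t. count_list w False = cb}"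
  have c: "real (card (Pt (Suc t))) + real ?cA + real ?cB = 2 * real (card (Pt t))"
  proof -
    have "real (card (Pt (Suc t)) + ?cA + ?cB) = real (2 * card (Pt t))"
      using card_step[where t=t] by (rule arg_cong)
    thus ?thesis by simp
  qed
  have "pmf (Psi []) z = ((\<Sum>w\<in>Pt (Suc t). pmf (Psi w) z) + (?cA + ?cB) * ?u) / 2 / 2 ^ t
      + (1 - card (Pt t) / 2 ^ t) * ?u"
    using Suc sum_step[where t=t and z=z] by simp
  also have "\<dots> = (\<Sum>w\<in>Pt (Suc t). pmf (Psi w) z) / 2 ^ Suc t
      + (1 - card (Pt (Suc t)) / 2 ^ Suc t) * ?u"
  proof -
    have "real (card (Pt t)) = (real (card (Pt (Suc t))) + real ?cA + real ?cB) / 2" using c by simp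
    from alg_step[OF _ this, of "2 ^ t" "\<Sum>w\<in>Pt (Suc t). pmf (Psi w) z" ?u]
    show ?thesis by simp
  qed
  finally show ?case .
qed

lemma Psi_nil: "Psi [] = shuffled (SA \<union> SB)"
proof (rule pmf_eqI)
  fix z
  show "pmf (Psi []) z = pmf (shuffled (SA \<union> SB)) z"
    using claim[where z=z and t="Suc (ca + cb)"] by (simp add: Pt_empty)
qed

lemma Psi_nil_eq:
  "Psi [] = map_pmf (\<lambda>T. take (card SA + card SB) (drop (length L) T))
           (bind_pmf (shuffled SA) (\<lambda>A. bind_pmf (shuffled SB) (\<lambda>B.
              Merge (L @ A @ B @ R) (length L) (card SA) (card SB))))"
proof -
  have wd: "win = (\<lambda>T. take (ca + cb) (drop sL T))" by (rule ext) (simp add: win_def)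
  have "\<And>A B. Cont (build L R A B []) sL (sL + ca) = Merge (L @ A @ B @ R) (length L) (card SA) (card SB)"
    by (simp add: Cont_def Merge_def build_def)
  thus ?thesis unfolding Psi_def wd by simp
qed

end

theorem mainTheorem1:
  fixes L R :: "'a list" and SA SB :: "'a set"
  assumes "finite SA" and "finite SB" and "SA \<inter> SB = {}"
  shows "map_pmf (\<lambda>T. take (card SA + card SB) (drop (length L) T))
           (bind_pmf (shuffled SA) (\<lambda>A. bind_pmf (shuffled SB) (\<lambda>B.
              Merge (L @ A @ B @ R) (length L) (card SA) (card SB))))
         = shuffled (SA \<union> SB)"
proof -
  interpret ctx L R SA SB using assms by unfold_locales
  show ?thesis using Psi_nil Psi_nil_eq by simp
qed

end
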